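(* Let $m$ be a nonnegative integer and $r>0$. Then $$\sum_{n=0}^{\infty}\frac{1}{(n+m+1)(2n+2m+2r+1)}\frac{\binom{2n}{n}}{\binom{2n+2m+2r}{n+m+r}}=\frac{1}{2(2m+1)\binom{2m}{m}}\cdot\frac{1}{(2r-1)\binom{2r-2}{r-1}}-\frac{1}{4^{m+r}}\sum_{k=0}^m\binom{m}{k}\frac{(-1)^k}{2k+1}\frac{k!}{(r)_{k+1}}.$$
   Context: $(x)_n=x(x+1)\cdots(x+n-1)$ denotes the Pochhammer symbol, $(x)_0=1$. For non-integer arguments, binomial coefficients are understood via the Gamma function: $\binom{a}{b}=\frac{\Gamma(a+1)}{\Gamma(b+1)\Gamma(a-b+1)}$. *)

theory Defs
  imports "HOL-Analysis.Analysis"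
begin

definition gbinom :: "real \<Rightarrow> real \<Rightarrow> real" where
  "gbinom a b = Gamma (a + 1) / (Gamma (b + 1) * Gamma (a - b + 1))"

text \<open>The factor (2r-1) * binom(2r-2, r-1). At r = 1/2 the literal product is the
  indeterminate form 0 * (pole); there it is understood by its (continuous) value
  Gamma(2r)/Gamma(r)^2 = 1/pi.\<close>
definition rfactor :: "real \<Rightarrow> real" where
  "rfactor r = (if r = 1/2 then Gamma (2*r) / (Gamma r)^2
                else (2*r - 1) * gbinom (2*r - 2) (r - 1))"

end

theory Submission imports Defs "HOL-Real_Asymp.Real_Asymp" begin


lemma dup_real:
  fixes s :: real assumes "s > 0"
  shows "Gamma (s + 1/2) * Gamma (s + 1) = sqrt pi * Gamma (2 * s + 1) / 4 powr s"
proof -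
  let ?z = "complex_of_real (s + 1/2)"
  have nz: "\<And>x::real. x > 0 \<Longrightarrow> complex_of_real x \<notin> \<int>\<^sub>\<le>\<^sub>0"
  proof
    fix x :: real assume x: "x > 0" "complex_of_real x \<in> \<int>\<^sub>\<le>\<^sub>0"
    then obtain n where "complex_of_real x = - of_nat n" by (auto elim!: nonpos_Ints_cases')
    hence "Re (complex_of_real x) = - real n" by (metis Re_complex_of_real of_real_minus of_real_of_nat_eq)
    with x show False by simp
  qed
  have e: "?z + 1/2 = complex_of_real (s + 1)" by simp
  have e2: "2 * ?z = complex_of_real (2 * s + 1)" by (simp add: algebra_simps)
  have e3: "(1 - complex_of_real (2 * s + 1)) = complex_of_real (- 2 * s)" by (simp add: algebra_simps)
  have "Gamma ?z * Gamma (?z + 1/2) = exp ((1 - 2 * ?z) * of_real (ln 2)) * of_real (sqrt pi) * Gamma (2 * ?z)"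
  proof (rule Gamma_legendre_duplication)
    show "?z \<notin> \<int>\<^sub>\<le>\<^sub>0" using nz[of "s + 1/2"] assms by simp
    show "?z + 1/2 \<notin> \<int>\<^sub>\<le>\<^sub>0" unfolding e using nz[of "s + 1"] assms by simp
  qed
  hence "complex_of_real (Gamma (s + 1/2) * Gamma (s + 1)) = complex_of_real (exp (- 2 * s * ln 2) * sqrt pi * Gamma (2 * s + 1))"
  proof -
    assume h: "Gamma ?z * Gamma (?z + 1/2) = exp ((1 - 2 * ?z) * of_real (ln 2)) * of_real (sqrt pi) * Gamma (2 * ?z)"
    have x: "exp ((1 - complex_of_real (2 * s + 1)) * complex_of_real (ln 2)) = complex_of_real (exp (- 2 * s * ln 2))"
      unfolding e3 by (simp only: exp_of_real flip: of_real_mult)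
    show ?thesis using h unfolding e e2 x by (simp only: Gamma_complex_of_real of_real_mult)
  qed
  hence "Gamma (s + 1/2) * Gamma (s + 1) = exp (- 2 * s * ln 2) * sqrt pi * Gamma (2 * s + 1)"
    using of_real_eq_iff by blast
  moreover have "exp (- 2 * s * ln 2) = 1 / 4 powr s"
    by (simp add: powr_def exp_minus ln_realpow[of 2 2, simplified] field_simps flip: exp_of_nat_mult)
  ultimately show ?thesis by simp
qed


definition cc :: "real \<Rightarrow> nat \<Rightarrow> real" where
  "cc s n = real (2 * n choose n) / gbinom (2 * real n + 2 * s) (real n + s)"

lemma Gamma_plus1_pos: "(x::real) > 0 \<Longrightarrow> Gamma (x + 1) = x * Gamma x"
  by (rule Gamma_plus1) (auto elim!: nonpos_Ints_cases)

lemma cc_Gamma: "s > 0 \<Longrightarrow> cc s n = real (2 * n choose n) * Gamma (real n + s + 1)^2 / Gamma (2 * real n + 2 * s + 1)"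
  unfolding cc_def gbinom_def by (simp add: power2_eq_square algebra_simps)

lemma cc_pos: "s > 0 \<Longrightarrow> cc s n > 0"
proof -
  assume s: "s > 0"
  have g: "Gamma (real n + s + 1) > 0" "Gamma (2 * real n + 2 * s + 1) > 0" using s by (auto intro!: Gamma_real_pos)
  have "Gamma (real n + s + 1)^2 > 0" using g(1) by (rule zero_less_power)
  moreover have "real (2 * n choose n) > 0" by simp
  ultimately show ?thesis using g(2) unfolding cc_Gamma[OF s] by (intro divide_pos_pos mult_pos_pos)
qed

lemma central_binom_Suc: "real (2 * Suc n choose Suc n) = real (2 * n choose n) * (2 * (2 * real n + 1) / (real n + 1))"
proof -
  have a: "real (2 * Suc n choose Suc n) = fact (2 * Suc n) / (fact (Suc n) * fact (Suc n))"
    by (subst binomial_fact) auto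
  have b: "real (2 * n choose n) = fact (2 * n) / (fact n * fact n)"
    by (subst binomial_fact) auto
  have c: "fact (2 * Suc n) = (2 * real n + 2) * ((2 * real n + 1) * (fact (2 * n) :: real))"
    by (simp add: algebra_simps)
  have d: "fact (Suc n) = (real n + 1) * (fact n :: real)" by (simp add: algebra_simps)
  have p: "(fact n :: real) > 0" "real n + 1 > 0" by auto
  define A where "A = (fact (2 * n) :: real)"
  define B where "B = (fact n :: real)"
  define q where "q = real n + 1"
  have "2 * real n + 2 = 2 * q" "2 * real n + 1 = 2 * q - 1" by (auto simp: q_def)
  then show ?thesis unfolding a b c d A_def[symmetric] B_def[symmetric] q_def[symmetric]
    using p unfolding B_def[symmetric] q_def[symmetric] by (simp add: field_simps)
qed

lemma cc_Suc: "s > 0 \<Longrightarrow> cc s (Suc n) = cc s n * ((2 * real n + 1) * (real n + s + 1) / ((real n + 1) * (2 * real n + 2 * s + 1)))"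
proof -
  assume s: "s > 0"
  have g1: "Gamma (real (Suc n) + s + 1) = (real n + s + 1) * Gamma (real n + s + 1)"
    using Gamma_plus1_pos[of "real n + s + 1"] s by (simp add: algebra_simps)
  have g2: "Gamma (2 * real (Suc n) + 2 * s + 1) = (2 * real n + 2 * s + 2) * ((2 * real n + 2 * s + 1) * Gamma (2 * real n + 2 * s + 1))"
    using Gamma_plus1_pos[of "2 * real n + 2 * s + 2"] Gamma_plus1_pos[of "2 * real n + 2 * s + 1"] s
    by (simp add: algebra_simps)
  have H: "Gamma (2 * real n + 2 * s + 1) > 0" using s by simp
  define u where "u = 2 * real n + 1"
  define v where "v = real n + s + 1"
  define w where "w = real n + 1"
  define z where "z = 2 * real n + 2 * s + 1"
  have pos: "u > 0" "v > 0" "w > 0" "z > 0" using s by (auto simp: u_def v_def w_def z_def)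
  have e: "2 * real n + 2 * s + 2 = 2 * v" by (simp add: v_def)
  show ?thesis using s H pos unfolding cc_Gamma[OF s] g1 g2 central_binom_Suc e u_def[symmetric] v_def[symmetric] w_def[symmetric] z_def[symmetric]
    by (simp add: field_simps power2_eq_square)
qed

definition PP :: "real \<Rightarrow> nat \<Rightarrow> real" where
  "PP s n = pochhammer (1/2) n * pochhammer (s + 1) n / (fact n * pochhammer (s + 1/2) n)"

lemma cc_PP: "s > 0 \<Longrightarrow> cc s n = cc s 0 * PP s n"
proof (induction n)
  case 0 then show ?case by (simp add: PP_def)
next
  case (Suc n)
  have "pochhammer (s + 1/2) n > 0" using Suc.prems by (intro pochhammer_pos) simp
  moreover have "(fact n :: real) > 0" by simp
  ultimately have "PP s (Suc n) = PP s n * ((2 * real n + 1) * (real n + s + 1) / ((real n + 1) * (2 * real n + 2 * s + 1)))"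
  proof -
    assume p3: "pochhammer (s + 1/2) n > 0" and F: "(fact n :: real) > 0"
    define u where "u = 2 * real n + 1"
    define v where "v = real n + s + 1"
    define w where "w = real n + 1"
    define z where "z = 2 * real n + 2 * s + 1"
    have pos: "u > 0" "v > 0" "w > 0" "z > 0" using Suc.prems by (auto simp: u_def v_def w_def z_def)
    have e: "1/2 + real n = u / 2" "s + 1 + real n = v" "s + 1/2 + real n = z / 2" "real (Suc n) = w"
      by (auto simp: u_def v_def w_def z_def field_simps)
    show ?thesis unfolding PP_def pochhammer_rec' fact_Suc of_nat_mult e u_def[symmetric] v_def[symmetric] w_def[symmetric] z_def[symmetric]
      using pos p3 F by (simp add: field_simps)
  qed
  then show ?case using Suc cc_Suc[OF Suc.prems, of n] by simp
qed

lemma alg: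
  fixes N a1 a2 a3 g1 g2 g3 F E1 E2 :: real
  assumes "N > 0" "a1 > 0" "a2 > 0" "a3 > 0" "g1 > 0" "g2 > 0" "g3 > 0" "F > 0" "E1 > 0" "E2 > 0"
  shows "N * a3 / (a1 * a2) * (g3 / (g1 * g2)) =
    (F * E1 / (g1 * a1)) * (F * E2 / (g2 * a2)) / (F * (F * (E1 * E2 / N) / (g3 * a3)))"
  using assms by (simp add: field_simps)

lemma PP_lim: assumes s: "s > 0"
  shows "PP s \<longlonglongrightarrow> Gamma (s + 1/2) / (Gamma (1/2) * Gamma (s + 1))"
proof -
  have poch: "pochhammer a n = fact n * exp (a * ln (real n)) / (Gamma_series a n * (a + real n))"
    if "a > 0" "n > 0" for a :: real and n
  proof -
    have p: "pochhammer a n > 0" using that by (intro pochhammer_pos)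
    define q where "q = a + real n"
    have q: "q > 0" using that by (simp add: q_def)
    have pr: "pochhammer a (Suc n) = q * pochhammer a n" by (simp add: pochhammer_rec' q_def)
    have "Gamma_series a n * (a + real n) = fact n * exp (a * ln (real n)) / pochhammer a n"
      unfolding Gamma_series_def q_def[symmetric] Suc_eq_plus1[symmetric] pr using q p by (simp add: field_simps)
    moreover have "Gamma_series a n * (a + real n) > 0" using that p unfolding Gamma_series_def
      by (intro mult_pos_pos divide_pos_pos pochhammer_pos) auto
    ultimately show ?thesis using p by (simp add: field_simps)
  qed
  have R: "(\<lambda>n. real n * (s + 1/2 + real n) / ((1/2 + real n) * (s + 1 + real n))) \<longlonglongrightarrow> 1"
    by real_asymp
  have L: "(\<lambda>n. real n * (s + 1/2 + real n) / ((1/2 + real n) * (s + 1 + real n)) *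
      (Gamma_series (s + 1/2) n / (Gamma_series (1/2) n * Gamma_series (s + 1) n)))
      \<longlonglongrightarrow> 1 * (Gamma (s + 1/2) / (Gamma (1/2) * Gamma (s + 1)))"
  proof -
    have gp: "Gamma (1/2::real) > 0" "Gamma (s + 1) > 0" using s by auto
    show ?thesis by (intro tendsto_intros R) (use gp in \<open>auto simp: Gamma_one_half_real\<close>)
  qed
  show ?thesis
  proof (rule Lim_transform_eventually[OF L[unfolded mult_1_left]])
    show "\<forall>\<^sub>F n in sequentially. real n * (s + 1/2 + real n) / ((1/2 + real n) * (s + 1 + real n)) *
      (Gamma_series (s + 1/2) n / (Gamma_series (1/2) n * Gamma_series (s + 1) n)) = PP s n"
      using eventually_gt_at_top[of "0::nat"]
    proof eventually_elim
      case (elim n)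
      have gs: "Gamma_series a n > 0" if "a > 0" for a :: real
        unfolding Gamma_series_def using that by (intro divide_pos_pos mult_pos_pos pochhammer_pos) auto
      have ex: "exp ((s + 1/2) * ln (real n)) = exp (1/2 * ln (real n)) * exp ((s+1) * ln (real n)) / real n"
      proof -
        have "exp (1/2 * ln (real n)) * exp ((s+1) * ln (real n)) = exp ((s + 1/2) * ln (real n)) * exp (ln (real n))"
          by (simp flip: exp_add add: algebra_simps)
        then show ?thesis using elim by simp
      qed
      show ?case unfolding PP_def
        by (subst poch, use s in simp, use elim in simp)+
           (unfold ex, rule alg, use elim s gs[of "1/2"] gs[of "s+1"] gs[of "s+1/2"] in auto)
    qed
  qed
qed



definition tt :: "nat \<Rightarrow> real \<Rightarrow> nat \<Rightarrow> real" where
  "tt m r k = real (m choose k) * ((-1) ^ k / (2 * real k + 1)) * (fact k / pochhammer r (k + 1))"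

lemma Bs_rec:
  fixes r :: real assumes r: "r > 0"
  shows "r * (2 * real (Suc k) + 1) * (\<Sum>j=0..Suc k. tt (Suc k) r j)
       - real (Suc k) * (2 * r + 1) * (\<Sum>j=0..k. tt k (r + 1) j) = 1"
proof -
  define m where "m = Suc k"
  define d where "d j = real (m choose j) * (-1)^j * fact j / pochhammer (r + 1) j" for j
  define f where "f j = 2 * d j * (r + real j) / (2 * real j - 1)" for j
  have pp: "pochhammer (r + 1) j > 0" for j using r by (intro pochhammer_pos) simp
  have i: "r * tt m r j = d j / (2 * real j + 1)" for j
  proof -
    define q where "q = 2 * real j + 1"
    define P where "P = pochhammer (r + 1) j"
    have h: "q > 0" "P > 0" using pp[of j] by (auto simp: q_def P_def)
    have e: "pochhammer r (j + 1) = r * P" by (simp add: P_def pochhammer_rec)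
    show ?thesis unfolding tt_def d_def e q_def[symmetric] P_def[symmetric] using r h
      by (simp add: field_simps)
  qed
  have ii: "real m * tt k (r + 1) (j - 1) = - d j / (2 * real j - 1)" if "j \<ge> 1" for j
  proof -
    define i where "i = j - 1"
    have j: "j = Suc i" using that by (simp add: i_def)
    have bn: "m * (k choose i) = Suc i * (m choose Suc i)"
      unfolding m_def by (subst Suc_times_binomial_eq) (rule mult.commute)
    have b: "real m * real (k choose i) = real (Suc i) * real (m choose Suc i)"
      using arg_cong[OF bn, of real] by (simp only: of_nat_mult)
    have "real m * tt k (r + 1) (j - 1) = (real m * real (k choose i)) * ((-1) ^ i / (2 * real i + 1)) * (fact i / pochhammer (r + 1) (i + 1))"
      unfolding tt_def j by simp
    also have "\<dots> = - d j / (2 * real j - 1)"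
    proof -
      define q where "q = 2 * real i + 1"
      define P where "P = pochhammer (r + 1) (Suc i)"
      have h: "q > 0" "P > 0" using pp[of "Suc i"] by (auto simp: q_def P_def)
      define w where "w = real (Suc i)"
      have e: "2 * real (Suc i) - 1 = q" by (simp add: q_def)
      have fs: "fact (Suc i) = w * (fact i :: real)" by (simp add: w_def)
      have w: "w > 0" by (simp add: w_def)
      have qw: "P + P * q = P * (w * 2)" by (simp add: q_def w_def algebra_simps)
      show ?thesis unfolding b d_def j e q_def[symmetric] P_def[symmetric] Suc_eq_plus1[symmetric] fs w_def[symmetric] using h w
        by (simp add: field_simps qw)
    qed
    finally show ?thesis .
  qed
  have iii: "d (Suc j) = - d j * (real m - real j) / (r + 1 + real j)" if "j \<le> m" for j
  proof -
    have b: "real (m choose Suc j) * real (Suc j) = real (m choose j) * (real m - real j)"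
    proof -
      have "(m - j) * (m choose j) = m * (k choose j)"
        unfolding m_def using binomial_absorb_comp[of "Suc k" j] by (simp only: diff_Suc_1)
      also have "\<dots> = (m choose Suc j) * Suc j" unfolding m_def by (rule Suc_times_binomial_eq)
      finally have "(m choose Suc j) * Suc j = (m - j) * (m choose j)" by simp
      from arg_cong[OF this, of real] show ?thesis using that by (simp only: of_nat_mult of_nat_diff mult.commute)
    qed
    define q where "q = r + 1 + real j"
    define P where "P = pochhammer (r + 1) j"
    have h: "q > 0" "P > 0" using pp[of j] r by (auto simp: q_def P_def)
    have e: "pochhammer (r + 1) (Suc j) = q * P" by (simp add: P_def q_def pochhammer_rec')
    define w where "w = real (Suc j)"
    have w: "w > 0" by (simp add: w_def)
    have fs: "fact (Suc j) = w * (fact j :: real)" by (simp add: w_def)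
    have b': "real (m choose Suc j) = real (m choose j) * (real m - real j) / w"
      using b w unfolding w_def[symmetric] by (simp add: field_simps)
    have "d (Suc j) = real (m choose Suc j) * (-1)^(Suc j) * fact (Suc j) / pochhammer (r + 1) (Suc j)"
      by (simp add: d_def)
    also have "\<dots> = - d j * (real m - real j) / q"
      unfolding b' fs e d_def P_def[symmetric] using h w by (simp add: field_simps)
    finally show ?thesis by (simp add: q_def)
  qed
  have iv: "r * (2 * real m + 1) * tt m r j - real m * (2 * r + 1) * tt k (r + 1) (j - 1) = f j - f (Suc j)"
    if j: "1 \<le> j" "j \<le> m" for j
  proof -
    define D where "D = d j"
    define a where "a = 2 * real j + 1"
    define b where "b = 2 * real j - 1"
    define c where "c = r + 1 + real j"
    have pos: "a > 0" "b > 0" "c > 0" using j r by (auto simp: a_def b_def c_def)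
    have e1: "r * tt m r j = D / a" using i[of j] by (simp add: D_def a_def)
    have e2: "real m * tt k (r + 1) (j - 1) = - D / b" using ii[OF j(1)] by (simp add: D_def b_def)
    have e3: "d (Suc j) = - D * (real m - real j) / c" using iii[OF j(2)] by (simp add: D_def c_def)
    have fj: "f j = 2 * D * (r + real j) / b" by (simp add: f_def D_def b_def)
    have fs: "f (Suc j) = 2 * d (Suc j) * c / a" by (simp add: f_def a_def c_def algebra_simps)
    have "r * (2 * real m + 1) * tt m r j - real m * (2 * r + 1) * tt k (r + 1) (j - 1)
       = (2 * real m + 1) * (r * tt m r j) - (2 * r + 1) * (real m * tt k (r + 1) (j - 1))" by (simp add: algebra_simps)
    also have "\<dots> = (2 * real m + 1) * D / a + (2 * r + 1) * D / b" unfolding e1 e2 by simp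
    also have "\<dots> = 2 * D * (r + real j) / b + 2 * D * (real m - real j) / a"
    proof -
      have x1: "(2 * r + 1) = 2 * (r + real j) - b" by (simp add: b_def)
      have x2: "(2 * real m + 1) = 2 * (real m - real j) + a" by (simp add: a_def)
      show ?thesis unfolding x1 x2 using pos by (simp add: field_simps)
    qed
    also have "\<dots> = f j - f (Suc j)" unfolding fj fs e3 using pos by (simp add: field_simps)
    finally show ?thesis .
  qed
  have t0: "tt m r 0 = 1 / r" by (simp add: tt_def)
  have f1: "f 1 = - 2 * real m" unfolding f_def d_def using r by (simp add: field_simps)
  have fm: "f (Suc m) = 0" unfolding f_def d_def by simp
  have s1: "(\<Sum>j=0..m. tt m r j) = tt m r 0 + (\<Sum>j=1..m. tt m r j)"
    by (simp add: sum.atLeast_Suc_atMost)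
  have s2: "(\<Sum>j=0..k. tt k (r + 1) j) = (\<Sum>j=1..m. tt k (r + 1) (j - 1))"
    unfolding m_def One_nat_def sum.shift_bounds_cl_Suc_ivl by simp
  have s3: "(\<Sum>j=1..m. f j - f (Suc j)) = f 1 - f (Suc m)"
  proof -
    have "(\<Sum>j=1..m. f j - f (Suc j)) = - (\<Sum>j=1..m. f (Suc j) - f j)"
      by (simp add: sum_negf[symmetric])
    also have "(\<Sum>j=1..m. f (Suc j) - f j) = f (Suc m) - f 1"
      by (rule sum_Suc_diff) simp
    finally show ?thesis by simp
  qed
  have "r * (2 * real m + 1) * (\<Sum>j=0..m. tt m r j) - real m * (2 * r + 1) * (\<Sum>j=0..k. tt k (r + 1) j)
      = r * (2 * real m + 1) * tt m r 0 + (\<Sum>j=1..m. r * (2 * real m + 1) * tt m r j - real m * (2 * r + 1) * tt k (r + 1) (j - 1))"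
    unfolding s1 s2 by (simp only: sum_subtractf sum_distrib_left[symmetric]) (simp add: algebra_simps)
  also have "\<dots> = r * (2 * real m + 1) * tt m r 0 + (\<Sum>j=1..m. f j - f (Suc j))"
    using iv by (intro arg_cong2[where f = "(+)"] refl sum.cong) auto
  also have "\<dots> = 1" unfolding s3 f1 fm t0 using r by (simp add: field_simps)
  finally show ?thesis unfolding m_def .
qed

lemma cc_lim: assumes s: "s > 0" shows "cc s \<longlonglongrightarrow> 1 / 4 powr s"
proof -
  have l: "(\<lambda>n. cc s 0 * PP s n) \<longlonglongrightarrow> cc s 0 * (Gamma (s + 1/2) / (Gamma (1/2) * Gamma (s + 1)))"
    by (intro tendsto_intros PP_lim s)
  have c0: "cc s 0 = Gamma (s + 1)^2 / Gamma (2 * s + 1)" using cc_Gamma[OF s, of 0] by simp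
  have g: "Gamma (s + 1) > 0" "Gamma (2 * s + 1) > 0" using s by auto
  have "cc s 0 * (Gamma (s + 1/2) / (Gamma (1/2) * Gamma (s + 1))) = (Gamma (s + 1/2) * Gamma (s + 1)) / (sqrt pi * Gamma (2 * s + 1))"
    unfolding c0 Gamma_one_half_real using g by (simp add: field_simps power2_eq_square)
  also have "\<dots> = 1 / 4 powr s" unfolding dup_real[OF s] using g by (simp add: field_simps)
  finally have v: "cc s 0 * (Gamma (s + 1/2) / (Gamma (1/2) * Gamma (s + 1))) = 1 / 4 powr s" .
  show ?thesis using l unfolding v cc_PP[OF s, symmetric] .
qed

lemma rf_eq: assumes r: "r > 0" shows "rfactor r = Gamma (2 * r) / Gamma r ^ 2"
proof (cases "r = 1/2")
  case True then show ?thesis by (simp add: rfactor_def)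
next
  case False
  have nz: "2 * r - 1 \<notin> \<int>\<^sub>\<le>\<^sub>0"
  proof
    assume "2 * r - 1 \<in> \<int>\<^sub>\<le>\<^sub>0"
    then obtain n where n: "2 * r - 1 = - real n" by (auto elim!: nonpos_Ints_cases')
    then have "real n < 1" using r by linarith
    then have "n = 0" by simp
    with n False show False by simp
  qed
  have g: "Gamma (2 * r) = (2 * r - 1) * Gamma (2 * r - 1)"
    using Gamma_plus1[OF nz] by simp
  have e: "gbinom (2 * r - 2) (r - 1) = Gamma (2 * r - 1) / (Gamma r * Gamma r)"
    unfolding gbinom_def by (simp add: algebra_simps)
  show ?thesis using False unfolding rfactor_def e g by (simp add: power2_eq_square)
qed

lemma tele0: assumes s: "s > 0"
  shows "(\<lambda>n. cc s n / ((real n + 1) * (2 * real n + 2 * s + 1))) sums ((cc s 0 - 1 / 4 powr s) / s)"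
proof -
  have t: "(\<lambda>n. cc s n - cc s (Suc n)) sums (cc s 0 - 1 / 4 powr s)"
    by (rule telescope_sums'[OF cc_lim[OF s]])
  have e: "cc s n - cc s (Suc n) = cc s n / ((real n + 1) * (2 * real n + 2 * s + 1)) * s" for n
  proof -
    define w where "w = real n + 1"
    define z where "z = 2 * real n + 2 * s + 1"
    have pos: "w > 0" "z > 0" using s by (auto simp: w_def z_def)
    have "cc s n - cc s (Suc n) = cc s n * ((w * z - (2 * real n + 1) * (real n + s + 1)) / (w * z))"
      unfolding cc_Suc[OF s] w_def[symmetric] z_def[symmetric] using pos by (simp add: field_simps)
    also have "w * z - (2 * real n + 1) * (real n + s + 1) = s" by (simp add: w_def z_def algebra_simps)
    finally show ?thesis using pos by (simp add: w_def[symmetric] z_def[symmetric])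
  qed
  show ?thesis using sums_divide[OF t, of s] s unfolding e by simp
qed

lemma tele1: assumes r: "r > 0" and m: "m \<ge> 1"
  shows "(\<lambda>n. r * (2 * real m + 1) * (cc (real m + r) n / ((real n + real m + 1) * (2 * real n + 2 * (real m + r) + 1)))
           - real m * (2 * r + 1) * (cc (real m + r) n / ((real n + real m) * (2 * real n + 2 * (real m + r) + 1))))
         sums (- (1 / 4 powr (real m + r)))"
proof -
  define s where "s = real m + r"
  have s: "s > 0" using r by (simp add: s_def)
  define f where "f n = cc s n * (real n / (real n + real m))" for n
  have "(\<lambda>n. real n / (real n + real m)) \<longlonglongrightarrow> 1" by real_asymp
  then have fl: "f \<longlonglongrightarrow> 1 / 4 powr s * 1" unfolding f_def by (intro tendsto_intros cc_lim s)
  have t: "(\<lambda>n. f n - f (Suc n)) sums (f 0 - 1 / 4 powr s)"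
    using telescope_sums'[OF fl] by simp
  have f0: "f 0 = 0" by (simp add: f_def)
  have e: "f n - f (Suc n) = r * (2 * real m + 1) * (cc s n / ((real n + real m + 1) * (2 * real n + 2 * s + 1)))
           - real m * (2 * r + 1) * (cc s n / ((real n + real m) * (2 * real n + 2 * s + 1)))" for n
  proof -
    define C where "C = cc s n"
    define A where "A = real n + real m"
    define B where "B = real n + real m + 1"
    define w where "w = real n + 1"
    define z where "z = 2 * real n + 2 * s + 1"
    have pos: "A > 0" "B > 0" "w > 0" "z > 0" using s m by (auto simp: A_def B_def w_def z_def)
    have fS: "f (Suc n) = C * ((2 * real n + 1) * (real n + s + 1) / (w * z)) * (w / B)"
      unfolding f_def cc_Suc[OF s] C_def w_def z_def B_def by (simp add: algebra_simps)
    have fn: "f n = C * (real n / A)" unfolding f_def C_def A_def ..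
    have poly: "real n * B * z - ((2 * real n + 1) * (real n + s + 1)) * A
        = r * (2 * real m + 1) * A - real m * (2 * r + 1) * B"
      unfolding A_def B_def z_def s_def by (simp add: algebra_simps)
    have l: "f n - f (Suc n) = C * (real n * B * z - ((2 * real n + 1) * (real n + s + 1)) * A) / (A * B * z)"
      unfolding fn fS using pos by (simp add: field_simps)
    have rr: "r * (2 * real m + 1) * (C / (B * z)) - real m * (2 * r + 1) * (C / (A * z))
        = C * (r * (2 * real m + 1) * A - real m * (2 * r + 1) * B) / (A * B * z)"
      using pos by (simp add: field_simps)
    show ?thesis unfolding l poly C_def[symmetric] unfolding B_def[symmetric] unfolding A_def[symmetric] z_def[symmetric] rr ..
  qed
  show ?thesis using t unfolding e f0 s_def by simp
qed


definition SS :: "nat \<Rightarrow> real \<Rightarrow> nat \<Rightarrow> real" where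
  "SS m r n = cc (real m + r) n / ((real n + real m + 1) * (2 * real n + 2 * real m + 2 * r + 1))"

definition FF :: "nat \<Rightarrow> real \<Rightarrow> real" where
  "FF m r = 1 / (2 * (2 * real m + 1) * real (2 * m choose m)) * (1 / rfactor r)
     - 1 / 4 powr (real m + r) * (\<Sum>k=0..m. tt m r k)"

lemma rf_pos: assumes r: "r > 0" shows "rfactor r > 0"
proof -
  have p: "Gamma r > 0" "Gamma (2 * r) > 0" using r by auto
  have "Gamma r ^ 2 > 0" using p(1) by (rule zero_less_power)
  then show ?thesis unfolding rf_eq[OF r] using p(2) by (rule divide_pos_pos[rotated])
qed

lemma rf_Suc: assumes r: "r > 0" shows "rfactor (r + 1) = rfactor r * (2 * (2 * r + 1) / r)"
proof -
  have g1: "Gamma (r + 1) = r * Gamma r" using Gamma_plus1_pos[OF r] .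
  have g2: "Gamma (2 * (r + 1)) = (2 * r + 1) * (2 * r * Gamma (2 * r))"
    using Gamma_plus1_pos[of "2 * r + 1"] Gamma_plus1_pos[of "2 * r"] r by (simp add: algebra_simps)
  have p: "Gamma r > 0" "Gamma (2 * r) > 0" using r by auto
  have eq: "rfactor (r + 1) = Gamma (2 * (r + 1)) / Gamma (r + 1) ^ 2" by (rule rf_eq) (use r in simp)
  define G1 where "G1 = Gamma r"
  define G2 where "G2 = Gamma (2 * r)"
  have q: "G1 > 0" "G2 > 0" using p by (auto simp: G1_def G2_def)
  show ?thesis unfolding eq rf_eq[OF r] g1 g2 G1_def[symmetric] G2_def[symmetric] using q r
    by (simp add: field_simps power2_eq_square)
qed

lemma main_base: assumes r: "r > 0" shows "SS 0 r sums FF 0 r"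
proof -
  have e: "SS 0 r = (\<lambda>n. cc r n / ((real n + 1) * (2 * real n + 2 * r + 1)))"
    by (auto simp: SS_def)
  have c0: "cc r 0 / r = 1 / 2 * (1 / rfactor r)"
  proof -
    have g1: "Gamma (r + 1) = r * Gamma r" using Gamma_plus1_pos[OF r] .
    have g2: "Gamma (2 * r + 1) = 2 * r * Gamma (2 * r)" using Gamma_plus1_pos[of "2 * r"] r by simp
    have p: "Gamma r > 0" "Gamma (2 * r) > 0" using r by auto
    have c: "cc r 0 = Gamma (r + 1)^2 / Gamma (2 * r + 1)" using cc_Gamma[OF r, of 0] by simp
    show ?thesis unfolding c rf_eq[OF r] g1 g2 using p r
      by (simp add: field_simps power2_eq_square)
  qed
  have "FF 0 r = (cc r 0 - 1 / 4 powr r) / r"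
    unfolding FF_def tt_def using c0 r by (simp add: field_simps)
  then show ?thesis unfolding e using tele0[OF r] by simp
qed

lemma cancel_aux: "(c::real) \<noteq> 0 \<Longrightarrow> ((c * X - Y) + Y) / c = X" by simp

lemma main: "r > 0 \<Longrightarrow> SS m r sums FF m r"
proof (induction m arbitrary: r)
  case 0 then show ?case by (rule main_base)
next
  case (Suc k r)
  have r: "r > 0" by fact
  define m where "m = Suc k"
  have IH: "SS k (r + 1) sums FF k (r + 1)" using Suc.IH r by simp
  have T: "(\<lambda>n. r * (2 * real m + 1) * (cc (real m + r) n / ((real n + real m + 1) * (2 * real n + 2 * (real m + r) + 1)))
           - real m * (2 * r + 1) * (cc (real m + r) n / ((real n + real m) * (2 * real n + 2 * (real m + r) + 1))))
         sums (- (1 / 4 powr (real m + r)))" by (rule tele1[OF r]) (simp add: m_def)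
  have h1: "SS m r n = cc (real m + r) n / ((real n + real m + 1) * (2 * real n + 2 * (real m + r) + 1))" for n
    unfolding SS_def by (simp add: algebra_simps)
  have h2: "SS k (r + 1) n = cc (real m + r) n / ((real n + real m) * (2 * real n + 2 * (real m + r) + 1))" for n
    unfolding SS_def m_def by (simp add: algebra_simps)
  have S: "(\<lambda>n. ((r * (2 * real m + 1) * (cc (real m + r) n / ((real n + real m + 1) * (2 * real n + 2 * (real m + r) + 1)))
           - real m * (2 * r + 1) * (cc (real m + r) n / ((real n + real m) * (2 * real n + 2 * (real m + r) + 1))))
           + real m * (2 * r + 1) * SS k (r + 1) n) / (r * (2 * real m + 1)))
       sums ((- (1 / 4 powr (real m + r)) + real m * (2 * r + 1) * FF k (r + 1)) / (r * (2 * real m + 1)))"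
    by (intro sums_divide sums_add T sums_mult IH)
  have fe: "(\<lambda>n. ((r * (2 * real m + 1) * (cc (real m + r) n / ((real n + real m + 1) * (2 * real n + 2 * (real m + r) + 1)))
           - real m * (2 * r + 1) * (cc (real m + r) n / ((real n + real m) * (2 * real n + 2 * (real m + r) + 1))))
           + real m * (2 * r + 1) * SS k (r + 1) n) / (r * (2 * real m + 1))) = SS m r"
  proof
    fix n
    show "((r * (2 * real m + 1) * (cc (real m + r) n / ((real n + real m + 1) * (2 * real n + 2 * (real m + r) + 1)))
           - real m * (2 * r + 1) * (cc (real m + r) n / ((real n + real m) * (2 * real n + 2 * (real m + r) + 1))))
           + real m * (2 * r + 1) * SS k (r + 1) n) / (r * (2 * real m + 1)) = SS m r n"
      unfolding h1 h2 by (rule cancel_aux) (use r in simp)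
  qed
  have ve: "(- (1 / 4 powr (real m + r)) + real m * (2 * r + 1) * FF k (r + 1)) / (r * (2 * real m + 1)) = FF m r"
  proof -
    define L where "L = 1 / 4 powr (real m + r)"
    define Bm where "Bm = (\<Sum>j=0..m. tt m r j)"
    define Bk where "Bk = (\<Sum>j=0..k. tt k (r + 1) j)"
    define R where "R = rfactor r"
    define Ck where "Ck = real (2 * k choose k)"
    define M where "M = real m"
    have pos: "R > 0" "Ck > 0" "M > 0" "r > 0" using rf_pos[OF r] r by (auto simp: R_def Ck_def M_def m_def)
    have BR: "r * (2 * M + 1) * Bm - M * (2 * r + 1) * Bk = 1"
      using Bs_rec[OF r, of k] unfolding Bm_def Bk_def M_def m_def by simp
    have Bm': "Bm = (1 + M * (2 * r + 1) * Bk) / (r * (2 * M + 1))"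
    proof (rule eq_divide_imp)
      show "r * (2 * M + 1) \<noteq> 0" using pos by simp
      show "Bm * (r * (2 * M + 1)) = 1 + M * (2 * r + 1) * Bk" using BR by (simp add: algebra_simps)
    qed
    have Cm: "real (2 * m choose m) = Ck * (2 * (2 * M - 1) / M)"
      unfolding m_def Ck_def M_def central_binom_Suc by (simp add: algebra_simps)
    have L': "1 / 4 powr (real k + (r + 1)) = L" unfolding L_def m_def by (simp add: algebra_simps)
    have FFk: "FF k (r + 1) = 1 / (2 * (2 * (M - 1) + 1) * Ck) * (1 / (R * (2 * (2 * r + 1) / r))) - L * Bk"
      unfolding FF_def L' Bk_def[symmetric] rf_Suc[OF r] R_def[symmetric] Ck_def[symmetric] by (simp add: M_def m_def)
    have FFm: "FF m r = 1 / (2 * (2 * M + 1) * (Ck * (2 * (2 * M - 1) / M))) * (1 / R) - L * Bm"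
      unfolding FF_def Cm L_def[symmetric] Bm_def[symmetric] R_def[symmetric] M_def ..
    define q1 where "q1 = 2 * M + 1"
    define q2 where "q2 = 2 * M - 1"
    define q3 where "q3 = 2 * r + 1"
    have qp: "q1 > 0" "q2 > 0" "q3 > 0" using pos by (auto simp: q1_def q2_def q3_def M_def m_def)
    have e1: "2 * (M - 1) + 1 = q2" by (simp add: q2_def)
    show ?thesis unfolding L_def[symmetric] unfolding FFk FFm Bm' e1 q1_def[symmetric] q2_def[symmetric] q3_def[symmetric] M_def[symmetric]
      using pos qp by (simp add: field_simps)
  qed
  have "SS m r sums FF m r" using S unfolding fe ve .
  then show ?case by (simp only: m_def)
qed

theorem theorem5p0p1:
  fixes m :: nat and r :: real
  assumes "r > 0"
  shows "(\<lambda>n. 1 / ((real n + real m + 1) * (2 * real n + 2 * real m + 2 * r + 1))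
              * (real (2 * n choose n)
                 / gbinom (2 * real n + 2 * real m + 2 * r) (real n + real m + r)))
         sums (1 / (2 * (2 * real m + 1) * real (2 * m choose m)) * (1 / rfactor r)
               - 1 / 4 powr (real m + r) *
                 (\<Sum>k=0..m. real (m choose k) * ((-1) ^ k / (2 * real k + 1))
                             * (fact k / pochhammer r (k + 1))))"
proof -
  have e: "(\<lambda>n. 1 / ((real n + real m + 1) * (2 * real n + 2 * real m + 2 * r + 1))
              * (real (2 * n choose n)
                 / gbinom (2 * real n + 2 * real m + 2 * r) (real n + real m + r))) = SS m r"
  proof
    fix n
    have a1: "2 * real n + 2 * (real m + r) = 2 * real n + 2 * real m + 2 * r" by simp
    have a2: "real n + (real m + r) = real n + real m + r" by simp
    show "1 / ((real n + real m + 1) * (2 * real n + 2 * real m + 2 * r + 1))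
              * (real (2 * n choose n)
                 / gbinom (2 * real n + 2 * real m + 2 * r) (real n + real m + r)) = SS m r n"
      unfolding SS_def cc_def a1 a2 by simp
  qed
  have v: "1 / (2 * (2 * real m + 1) * real (2 * m choose m)) * (1 / rfactor r)
               - 1 / 4 powr (real m + r) *
                 (\<Sum>k=0..m. real (m choose k) * ((-1) ^ k / (2 * real k + 1))
                             * (fact k / pochhammer r (k + 1))) = FF m r"
    unfolding FF_def tt_def ..
  show ?thesis unfolding e v by (rule main[OF assms])
qed

end
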